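(* Let $(X,\mathcal{A},p)$ be a standard Borel probability space. For a sub-$\sigma$-algebra $\mathcal{B}\subseteq\mathcal{A}$ let $\overline{\mathcal{B}}=\{A\in\mathcal{A}:\ p(A\,\triangle\,B)=0\text{ for some }B\in\mathcal{B}\}$. If $(\mathcal{B}_n)_{n\ge0}$ is a sequence of sub-$\sigma$-algebras with $\mathcal{B}_{n+1}\subseteq\mathcal{B}_n$ for all $n$, then $\bigcap_n\overline{\mathcal{B}_n}=\overline{\bigcap_n\mathcal{B}_n}$.
   Context: In the paper $\overline{\mathcal{B}}$ is written $\mathcal{I}_{e_\mathcal{B}}$, the invariant $\sigma$-algebra of the conditional expectation kernel $e_\mathcal{B}(A\mid x)=\mathbb{P}[A\mid\mathcal{B}](x)$; it equals the set of $A\in\mathcal{A}$ almost surely equal to a set in $\mathcal{B}$. *)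

theory Defs
  imports "HOL-Probability.Probability"
begin

definition standard_borel :: "'a measure \<Rightarrow> bool" where
  "standard_borel M \<longleftrightarrow>
     (\<exists>T. completely_metrizable_space T \<and> separable_space T \<and>
          topspace T = space M \<and> sets M = sigma_sets (topspace T) {U. openin T U})"

definition null_closure :: "'a measure \<Rightarrow> 'a set set \<Rightarrow> 'a set set" where
  "null_closure M S = {A \<in> sets M. \<exists>B \<in> S. emeasure M ((A - B) \<union> (B - A)) = 0}"

end

theory Submission
  imports Defs
begin

theorem proposition4p20:
  fixes M :: "'a measure" and B :: "nat \<Rightarrow> 'a measure"
  assumes "prob_space M"
    and "standard_borel M"
    and "\<And>n. subalgebra M (B n)"
    and "\<And>n. sets (B (Suc n)) \<subseteq> sets (B n)"
  shows "(\<Inter>n. null_closure M (sets (B n))) = null_closure M (\<Inter>n. sets (B n))"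
proof
  show "null_closure M (\<Inter>n. sets (B n)) \<subseteq> (\<Inter>n. null_closure M (sets (B n)))"
    unfolding null_closure_def by blast
next
  have mono: "sets (B n) \<subseteq> sets (B k)" if "k \<le> n" for k n
    using lift_Suc_antimono_le[of "\<lambda>n. sets (B n)", OF _ that] assms(4) by auto
  have subM: "sets (B n) \<subseteq> sets M" for n
    using assms(3) unfolding subalgebra_def by auto
  show "(\<Inter>n. null_closure M (sets (B n))) \<subseteq> null_closure M (\<Inter>n. sets (B n))"
  proof
    fix A assume A: "A \<in> (\<Inter>n. null_closure M (sets (B n)))"
    then have AM: "A \<in> sets M" unfolding null_closure_def by auto
    have "\<forall>n. \<exists>F \<in> sets (B n). emeasure M ((A - F) \<union> (F - A)) = 0"
      using A unfolding null_closure_def by auto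
    then obtain f where f: "\<And>n. f n \<in> sets (B n)"
      and f0: "\<And>n. emeasure M ((A - f n) \<union> (f n - A)) = 0" by metis
    define U where "U m = (\<Union>i. f (i + m))" for m
    define C where "C = (\<Inter>m. U m)"
    have Uanti: "U (m + k) \<subseteq> U m" for m k
      unfolding U_def by (auto, metis add.assoc add.commute)
    have Ck: "C \<in> sets (B k)" for k
    proof -
      have "C = (\<Inter>m. U (m + k))"
        unfolding C_def using Uanti by blast
      moreover have "U (m + k) \<in> sets (B k)" for m
      proof -
        have "f (i + (m + k)) \<in> sets (B k)" for i
          using f[of "i + (m + k)"] mono[of k "i + (m + k)"] by auto
        then show ?thesis unfolding U_def by (intro sets.countable_UN) auto
      qed
      ultimately show ?thesis using sets.countable_INT[of "\<lambda>m. U (m + k)" UNIV "B k"] by auto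
    qed
    have nul: "(A - f n) \<union> (f n - A) \<in> null_sets M" for n
      using f0[of n] f[of n] subM[of n] AM by (auto simp: null_sets_def intro!: sets.Un sets.Diff)
    have sub: "(A - C) \<union> (C - A) \<subseteq> (\<Union>n. (A - f n) \<union> (f n - A))"
    proof
      fix x assume x: "x \<in> (A - C) \<union> (C - A)"
      show "x \<in> (\<Union>n. (A - f n) \<union> (f n - A))"
      proof (cases "x \<in> A")
        case True
        then obtain m where "x \<notin> U m" using x unfolding C_def by auto
        then have "x \<notin> f m" unfolding U_def by (metis UN_I UNIV_I add_0)
        then show ?thesis using True by auto
      next
        case False
        then have "x \<in> U 0" using x unfolding C_def by auto
        then obtain i where "x \<in> f i" unfolding U_def by auto
        then show ?thesis using False by auto
      qed
    qed
    have CM: "C \<in> sets M" using Ck[of 0] subM[of 0] by blast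
    have "(A - C) \<union> (C - A) \<in> sets M" using CM AM by (intro sets.Un sets.Diff)
    then have "(A - C) \<union> (C - A) \<in> null_sets M"
      using null_sets_subset[OF null_sets_UN[OF nul] _ sub] by blast
    then have "emeasure M ((A - C) \<union> (C - A)) = 0" by blast
    moreover have "C \<in> (\<Inter>n. sets (B n))" using Ck by blast
    ultimately show "A \<in> null_closure M (\<Inter>n. sets (B n))"
      unfolding null_closure_def using AM by blast
  qed
qed

end
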